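(* (a) Let $p$ be a prime and let $W\subset \mathbb{Z}_p$ be a nonempty set of residues with \[ |W| < \frac{p-1}{2} - \frac{\log p}{\log (4/3)}. \] Then there exist sets $U,V\subset\mathbb{Z}_p$ forming a prime-compatible pair modulo $p$ with $W\subset U$ and $W\subset V$. (b) Let $p\ge 7$ be a prime. Then there exist sets $U,V\subset\mathbb{Z}_p$ forming a prime-compatible pair modulo $p$ such that the residues of $1$ and $11$ lie in $U\setminus V$, the residue of $6$ lies in $V\setminus U$, and $|U\cap V|=2$.
   Context: $\mathbb{Z}_p$ denotes the integers modulo $p$ and $\mathbb{Z}_p^*$ its nonzero residues. For a prime $p$ and nonempty sets $U,V\subset\mathbb{Z}_p$, the pair $U,V$ is called a prime-compatible pair (modulo $p$) if $(U\setminus V)-(V\setminus U)=\{u-v: u\in U\setminus V,\ v\in V\setminus U\}$ equals $\mathbb{Z}_p^*$. *)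

theory Defs
  imports "HOL-Computational_Algebra.Primes" Complex_Main
begin

text \<open>Residues modulo p are represented by the integers 0, ..., p-1;
  a subset of Z_p is a subset of {0..<p}. Difference in Z_p is (u - v) mod p,
  and Z_p^* is {1..<p}.\<close>

definition prime_compatible :: "int \<Rightarrow> int set \<Rightarrow> int set \<Rightarrow> bool" where
  "prime_compatible p U V \<longleftrightarrow>
     U \<subseteq> {0..<p} \<and> V \<subseteq> {0..<p} \<and> U \<noteq> {} \<and> V \<noteq> {} \<and>
     {(u - v) mod p | u v. u \<in> U - V \<and> v \<in> V - U} = {1..<p}"

end

theory Submission
  imports Defs
begin


lemma small_dvd_zero:
  fixes x p :: int
  assumes "p dvd x" "-p < x" "x < p"
  shows "x = 0"
proof (rule ccontr)
  assume "x \<noteq> 0"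
  from dvd_imp_le_int[OF this assms(1)] assms show False by auto
qed

lemma mul_inj:
  fixes p d :: int
  assumes "prime p" "\<not> p dvd d"
  shows "inj_on (\<lambda>k. (k*d) mod p) {0..<p}"
proof (rule inj_onI)
  fix k k' assume k: "k \<in> {0..<p}" "k' \<in> {0..<p}" and e: "(k*d) mod p = (k'*d) mod p"
  hence "p dvd k*d - k'*d" by (simp add: mod_eq_dvd_iff)
  hence "p dvd (k - k')*d" by (simp add: algebra_simps)
  hence "p dvd (k - k')" using assms prime_dvd_mult_iff by blast
  thus "k = k'" using small_dvd_zero[of p "k-k'"] k by auto
qed

lemma mul_surj:
  fixes p d :: int
  assumes "prime p" "\<not> p dvd d"
  shows "(\<lambda>k. (k*d) mod p) ` {0..<p} = {0..<p}"
proof (rule endo_inj_surj)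
  have "p > 0" using assms prime_gt_0_int by auto
  thus "(\<lambda>k. (k*d) mod p) ` {0..<p} \<subseteq> {0..<p}" by auto
qed (use mul_inj[OF assms] in auto)

lemma partb_gen:
  fixes p a \<delta> h :: int
  assumes pp: "prime p" and p7: "p \<ge> 7" and nd: "\<not> p dvd \<delta>"
    and h1: "1 \<le> h" "h \<le> p-2" and h2: "h \<noteq> 2" "h \<noteq> p - 3"
  defines "pos \<equiv> \<lambda>k. (a - k*\<delta>) mod p"
  defines "S \<equiv> {j\<in>{1..p-2}. odd j} \<union> {h}"
  defines "U \<equiv> pos ` {0, p-1, 2, p-3}"
  defines "V \<equiv> pos ` (S \<union> {2, p-3})"
  shows "prime_compatible p U V \<and> pos 0 \<in> U - V \<and> pos (p-1) \<in> U - V \<and> pos h \<in> V - U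
     \<and> card (U \<inter> V) = 2"
proof -
  have p0: "p > 0" using p7 by auto
  have op: "odd p" using prime_odd_int[OF pp] p7 by auto
  have injpos: "inj_on pos {0..<p}"
  proof (rule inj_onI)
    fix k k' assume k: "k \<in> {0..<p}" "k' \<in> {0..<p}" and e: "pos k = pos k'"
    hence "p dvd (a - k*\<delta>) - (a - k'*\<delta>)" by (simp add: pos_def mod_eq_dvd_iff)
    hence "p dvd (k' - k)*\<delta>" by (simp add: algebra_simps)
    hence "p dvd (k' - k)" using nd pp prime_dvd_mult_iff by blast
    thus "k = k'" using small_dvd_zero[of p "k'-k"] k by auto
  qed
  have diff: "(pos i - pos j) mod p = ((j - i) * \<delta>) mod p" for i j
  proof -
    have "(pos i - pos j) mod p = ((a - i*\<delta>) - (a - j*\<delta>)) mod p"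
      unfolding pos_def by (rule mod_diff_eq)
    also have "(a - i*\<delta>) - (a - j*\<delta>) = (j - i) * \<delta>" by (simp add: algebra_simps)
    finally show ?thesis .
  qed
  have S_sub: "S \<subseteq> {1..p-2}" using h1 by (auto simp: S_def)
  have ev3: "even (p - 3)" using op by simp
  have S_disj: "2 \<notin> S" "p - 3 \<notin> S" using h2 ev3 by (auto simp: S_def)
  define X where "X = {0, p-1, 2, p-3}"
  define Y where "Y = S \<union> {2, p-3}"
  have Xs: "X \<subseteq> {0..<p}" using p7 by (auto simp: X_def)
  have Ys: "Y \<subseteq> {0..<p}" using p7 S_sub by (auto simp: Y_def)
  have XY: "X - Y = {0, p-1}" using S_sub p7 by (auto simp: X_def Y_def)
  have YX: "Y - X = S" using S_sub S_disj p7 by (auto simp: X_def Y_def)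
  have XiY: "X \<inter> Y = {2, p-3}" using S_sub S_disj p7 by (auto simp: X_def Y_def)
  have UX: "U = pos ` X" and VY: "V = pos ` Y" by (simp_all add: U_def X_def V_def Y_def)
  have e1: "pos ` (X - Y) = pos ` X - pos ` Y"
    by (rule inj_on_image_set_diff[OF injpos]) (use Xs Ys in auto)
  have e2: "pos ` (Y - X) = pos ` Y - pos ` X"
    by (rule inj_on_image_set_diff[OF injpos]) (use Xs Ys in auto)
  have e3: "pos ` (X \<inter> Y) = pos ` X \<inter> pos ` Y"
    by (rule inj_on_image_Int[OF injpos]) (use Xs Ys in auto)
  have UmV: "U - V = pos ` {0, p-1}" using e1 XY UX VY by simp
  have VmU: "V - U = pos ` S" using e2 YX UX VY by simp
  have UiV: "U \<inter> V = pos ` {2, p-3}" using e3 XiY UX VY by simp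
  have cardUV: "card (U \<inter> V) = 2"
  proof -
    have "inj_on pos {2, p-3}" by (rule inj_on_subset[OF injpos]) (use p7 in auto)
    hence "card (pos ` {2, p-3}) = card {2, p-3}" by (rule card_image)
    thus ?thesis using UiV p7 by simp
  qed
  have dset: "{(u - v) mod p | u v. u \<in> U - V \<and> v \<in> V - U} = {1..<p}"
  proof (intro equalityI subsetI)
    fix z assume "z \<in> {(u - v) mod p | u v. u \<in> U - V \<and> v \<in> V - U}"
    then obtain i j where ij: "i \<in> {0, p-1}" "j \<in> S" "z = (pos i - pos j) mod p"
      unfolding UmV VmU by blast
    hence z: "z = ((j - i) * \<delta>) mod p" using diff by simp
    have "z \<noteq> 0"
    proof
      assume "z = 0"
      hence "p dvd (j - i) * \<delta>" using z by (simp add: mod_eq_0_iff_dvd)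
      hence "p dvd (j - i)" using nd pp prime_dvd_mult_iff by blast
      moreover have "-p < j - i" "j - i < p" "j \<noteq> i" using ij S_sub by auto
      ultimately show False using small_dvd_zero[of p "j - i"] by auto
    qed
    moreover have "0 \<le> z" "z < p" using z p0 by auto
    ultimately show "z \<in> {1..<p}" by auto
  next
    fix z assume z: "z \<in> {1..<p}"
    hence "z \<in> (\<lambda>k. (k*\<delta>) mod p) ` {0..<p}" using mul_surj[OF pp nd] by auto
    then obtain k where k: "k \<in> {0..<p}" "z = (k*\<delta>) mod p" by auto
    have k0: "k \<noteq> 0" using k z by auto
    show "z \<in> {(u - v) mod p | u v. u \<in> U - V \<and> v \<in> V - U}"
    proof (cases "odd k")
      case True
      hence "k \<noteq> p - 1" using op by auto
      hence "k \<in> S" using True k k0 by (auto simp: S_def)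
      moreover have "z = (pos 0 - pos k) mod p" using diff[of 0 k] k by simp
      ultimately show ?thesis unfolding UmV VmU by blast
    next
      case False
      hence "k - 1 \<in> S" using k k0 by (auto simp: S_def)
      moreover have "z = (pos (p-1) - pos (k-1)) mod p"
      proof -
        have "(pos (p-1) - pos (k-1)) mod p = ((k - p) * \<delta>) mod p" using diff[of "p-1" "k-1"] by simp
        also have "(k - p) * \<delta> = k * \<delta> + (- \<delta>) * p" by (simp add: algebra_simps)
        also have "(k * \<delta> + (- \<delta>) * p) mod p = (k*\<delta>) mod p" by (rule mod_mult_self1)
        finally show ?thesis using k by simp
      qed
      ultimately show ?thesis unfolding UmV VmU by blast
    qed
  qed
  have "U \<subseteq> {0..<p}" "V \<subseteq> {0..<p}" using p0 by (auto simp: U_def V_def pos_def)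
  moreover have "U \<noteq> {}" "V \<noteq> {}" by (auto simp: U_def V_def)
  ultimately have "prime_compatible p U V" using dset by (simp add: prime_compatible_def)
  moreover have "h \<in> S" by (simp add: S_def)
  ultimately show ?thesis using UmV VmU cardUV by auto
qed

lemma partb:
  fixes p :: int
  assumes pp: "prime p" and p7: "p \<ge> 7"
  shows "\<exists>U V. prime_compatible p U V \<and>
               1 mod p \<in> U - V \<and> 11 mod p \<in> U - V \<and> 6 mod p \<in> V - U \<and>
               card (U \<inter> V) = 2"
proof -
  have op: "odd p" using prime_odd_int[OF pp] p7 by auto
  define h where "h = (p - 1) div 2"
  have h2: "2 * h = p - 1" using op unfolding h_def by (metis odd_two_times_div_two_nat oddE
     add_diff_cancel_right' nonzero_mult_div_cancel_left zero_neq_numeral)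
  have nd: "\<not> p dvd 10"
  proof
    assume "p dvd 10"
    hence "p dvd 2 * 5" by simp
    hence "p dvd 2 \<or> p dvd 5" using pp prime_dvd_mult_iff by blast
    thus False using p7 zdvd_imp_le[of p 2] zdvd_imp_le[of p 5] by auto
  qed
  have hb: "1 \<le> h" "h \<le> p-2" "h \<noteq> 2" "h \<noteq> p - 3" using h2 p7 by auto
  from partb_gen[OF pp p7 nd hb, of 1] obtain U V where
    H: "prime_compatible p U V" "(1 - 0*10) mod p \<in> U - V" "(1 - (p-1)*10) mod p \<in> U - V"
       "(1 - h*10) mod p \<in> V - U" "card (U \<inter> V) = 2" by blast
  have "(1 - (p-1)*10) mod p = (11 + (-10)*p) mod p" by (simp add: algebra_simps)
  also have "\<dots> = 11 mod p" by (rule mod_mult_self1)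
  finally have e11: "(1 - (p-1)*10) mod p = 11 mod p" .
  have "1 - h*10 = 6 + (-5)*p" using h2 by (simp add: algebra_simps)
  hence e6: "(1 - h*10) mod p = 6 mod p" by (simp only: mod_mult_self1)
  show ?thesis using H e11 e6 by auto
qed



lemma count_G:
  fixes fx fy :: "'j \<Rightarrow> 'a" and C :: "'a set"
  assumes "finite J" "finite C"
  shows "(\<forall>j\<in>J. fx j \<in> C \<and> fy j \<in> C \<and> fx j \<noteq> fy j) \<Longrightarrow>
    (\<forall>j\<in>J. \<forall>j'\<in>J. j \<noteq> j' \<longrightarrow> fx j \<noteq> fx j' \<and> fx j \<noteq> fy j' \<and> fy j \<noteq> fx j' \<and> fy j \<noteq> fy j') \<Longrightarrow>
    4^card J * card {A. A \<subseteq> C \<and> (\<forall>j\<in>J. fx j \<in> A \<or> fy j \<notin> A)} = 3^card J * 2^card C"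
  using assms(1)
proof (induction J rule: finite_induct)
  case empty
  have "{A. A \<subseteq> C \<and> (\<forall>j\<in>{}. fx j \<in> A \<or> fy j \<notin> A)} = Pow C" by auto
  thus ?case using assms(2) by (simp add: card_Pow)
next
  case (insert j J)
  define x where "x = fx j"
  define y where "y = fy j"
  define G where "G = {A. A \<subseteq> C \<and> (\<forall>j\<in>J. fx j \<in> A \<or> fy j \<notin> A)}"
  define G' where "G' = {A. A \<subseteq> C \<and> (\<forall>j\<in>insert j J. fx j \<in> A \<or> fy j \<notin> A)}"
  define G0 where "G0 = {A \<in> G. x \<notin> A \<and> y \<notin> A}"
  have IH: "4^card J * card G = 3^card J * 2^card C"
    using insert.IH insert.prems unfolding G_def by auto
  have xy: "x \<in> C" "y \<in> C" "x \<noteq> y" using insert.prems unfolding x_def y_def by auto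
  have other: "fx j' \<notin> {x, y}" "fy j' \<notin> {x, y}" if "j' \<in> J" for j'
    using insert.prems insert.hyps that unfolding x_def y_def by (metis insertCI insertE singletonD)+
  define f where "f = (\<lambda>A. (A - {x,y}, A \<inter> {x,y}))"
  have finj: "inj_on f S" for S
  proof (rule inj_onI)
    fix A B assume "f A = f B"
    hence "A - {x,y} = B - {x,y}" "A \<inter> {x,y} = B \<inter> {x,y}" by (auto simp: f_def)
    thus "A = B" by (metis Diff_partition Int_Diff_Un Int_commute inf_le2)
  qed
  have constr: "(\<forall>j'\<in>J. fx j' \<in> A \<or> fy j' \<notin> A) \<longleftrightarrow> (\<forall>j'\<in>J. fx j' \<in> B \<or> fy j' \<notin> B)"
    if "A - {x,y} = B - {x,y}" for A B
  proof -
    have "fx j' \<in> A \<longleftrightarrow> fx j' \<in> B" "fy j' \<in> A \<longleftrightarrow> fy j' \<in> B" if "j' \<in> J" for j'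
      using other[OF that] \<open>A - {x,y} = B - {x,y}\<close> by (auto simp: set_eq_iff)
    thus ?thesis by blast
  qed
  have fG: "f ` G = G0 \<times> Pow {x,y}"
  proof (intro equalityI subsetI)
    fix z assume "z \<in> f ` G"
    then obtain A where A: "A \<in> G" "z = f A" by auto
    have "A - {x,y} - {x,y} = A - {x,y}" by auto
    hence "A - {x,y} \<in> G" using A constr[of "A - {x,y}" A] by (auto simp: G_def)
    thus "z \<in> G0 \<times> Pow {x,y}" using A by (auto simp: f_def G0_def)
  next
    fix z assume "z \<in> G0 \<times> Pow {x,y}"
    then obtain B T where BT: "z = (B, T)" "B \<in> G0" "T \<subseteq> {x,y}" by auto
    have "(B \<union> T) - {x,y} = B - {x,y}" using BT by auto
    hence "B \<union> T \<in> G" using BT xy constr[of "B \<union> T" B] by (auto simp: G_def G0_def)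
    moreover have "f (B \<union> T) = z" using BT by (auto simp: f_def G0_def)
    ultimately show "z \<in> f ` G" by (metis imageI)
  qed
  have G'eq: "G' = {A \<in> G. x \<in> A \<or> y \<notin> A}"
    unfolding G'_def G_def x_def y_def by auto
  have fG': "f ` G' = G0 \<times> (Pow {x,y} - {{y}})"
  proof -
    have key: "A \<inter> {x,y} \<noteq> {y} \<longleftrightarrow> x \<in> A \<or> y \<notin> A" for A using xy by blast
    have "f ` G' = {z \<in> f ` G. snd z \<noteq> {y}}"
    proof (intro equalityI subsetI)
      fix z assume "z \<in> f ` G'"
      then obtain A where "A \<in> G'" "z = f A" by blast
      thus "z \<in> {z \<in> f ` G. snd z \<noteq> {y}}" unfolding G'eq using key[of A] by (simp add: f_def)
    next
      fix z assume "z \<in> {z \<in> f ` G. snd z \<noteq> {y}}"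
      then obtain A where "A \<in> G" "z = f A" "snd z \<noteq> {y}" by blast
      hence "A \<in> G'" "z = f A" unfolding G'eq using key[of A] by (simp_all add: f_def)
      thus "z \<in> f ` G'" by blast
    qed
    also have "\<dots> = G0 \<times> (Pow {x,y} - {{y}})" unfolding fG by auto
    finally show ?thesis .
  qed
  have c4: "card (Pow {x,y}) = 4" using xy by (simp add: card_Pow)
  have "Pow {x,y} - {{y}} = {{}, {x}, {x,y}}" using xy by auto
  hence c3: "card (Pow {x,y} - {{y}}) = 3" using xy by simp
  have "card G = card (f ` G)" using finj by (simp add: card_image)
  hence cG: "card G = card G0 * 4" using fG c4 by (simp add: card_cartesian_product)
  have "card G' = card (f ` G')" using finj by (simp add: card_image)
  hence cG': "card G' = card G0 * 3" using fG' c3 by (simp add: card_cartesian_product)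
  have "4^card (insert j J) * card G' = 4 * 4^card J * (card G0 * 3)"
    using insert.hyps cG' by simp
  also have "\<dots> = 3 * (4^card J * card G)" using cG by simp
  also have "\<dots> = 3^card (insert j J) * 2^card C" using IH insert.hyps by simp
  finally show ?case unfolding G'_def .
qed



lemma bad_bound:
  fixes p d :: int and C :: "int set"
  assumes pp: "prime p" and Csub: "C \<subseteq> {0..<p}" and d: "d \<in> {1..<p}"
    and big: "(2 * real (card C) - real_of_int p - 1) / 2 > ln (real_of_int p) / ln (4/3)"
  shows "real (card {A \<in> Pow C. \<forall>b\<in>C - A. (b + d) mod p \<notin> A}) \<le> 2 ^ card C / real_of_int p"
proof -
  have p1: "p > 1" using pp prime_gt_1_int by auto
  have finC: "finite C" using Csub finite_subset by blast
  have nd: "\<not> p dvd d" using d zdvd_imp_le[of p d] by auto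
  define \<phi> where "\<phi> = (\<lambda>k. (k*d) mod p)"
  define \<sigma> where "\<sigma> = (\<lambda>b. (b + d) mod p)"
  have injphi: "inj_on \<phi> {0..<p}" unfolding \<phi>_def by (rule mul_inj[OF pp nd])
  have surjphi: "\<phi> ` {0..<p} = {0..<p}" unfolding \<phi>_def by (rule mul_surj[OF pp nd])
  have succ: "\<phi> (j+1) = \<sigma> (\<phi> j)" for j
  proof -
    have "((j+1)*d) mod p = (j*d + d) mod p" by (simp add: algebra_simps)
    also have "\<dots> = ((j*d) mod p + d) mod p" by (metis mod_add_left_eq)
    finally show ?thesis unfolding \<phi>_def \<sigma>_def .
  qed
  have injsig: "inj_on \<sigma> {0..<p}"
  proof (rule inj_onI)
    fix b b' assume b: "b \<in> {0..<p}" "b' \<in> {0..<p}" and "\<sigma> b = \<sigma> b'"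
    hence "p dvd (b + d) - (b' + d)" by (simp add: \<sigma>_def mod_eq_dvd_iff)
    hence "p dvd b - b'" by simp
    thus "b = b'" using small_dvd_zero[of p "b - b'"] b by auto
  qed
  define Cs where "Cs = {b\<in>{0..<p}. \<sigma> b \<in> C}"
  have "\<sigma> ` Cs = C"
  proof (intro equalityI subsetI)
    fix y assume "y \<in> \<sigma> ` Cs" thus "y \<in> C" by (auto simp: Cs_def)
  next
    fix y assume y: "y \<in> C"
    hence y0: "0 \<le> y" "y < p" using Csub by auto
    have "\<sigma> ((y - d) mod p) = ((y - d) mod p + d) mod p" by (simp add: \<sigma>_def)
    also have "\<dots> = y mod p" by (simp add: mod_add_left_eq)
    also have "\<dots> = y" using y0 by simp
    finally have "\<sigma> ((y - d) mod p) = y" .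
    moreover have "(y - d) mod p \<in> Cs" using calculation y p1 by (simp add: Cs_def)
    ultimately show "y \<in> \<sigma> ` Cs" by (metis imageI)
  qed
  moreover have "inj_on \<sigma> Cs" using injsig by (rule inj_on_subset) (auto simp: Cs_def)
  ultimately have cCs: "card Cs = card C" by (metis card_image)
  define D where "D = {b \<in> C. \<sigma> b \<in> C}"
  have DCs: "D = C \<inter> Cs" using Csub by (auto simp: D_def Cs_def)
  have finCs: "finite Cs" by (rule finite_subset[of _ "{0..<p}"]) (auto simp: Cs_def)
  have "card C + card Cs = card (C \<union> Cs) + card (C \<inter> Cs)" using finC finCs by (rule card_Un_Int)
  moreover have "card (C \<union> Cs) \<le> card {0..<p}" by (rule card_mono) (use Csub in \<open>auto simp: Cs_def\<close>)
  ultimately have cD: "int (card D) \<ge> 2 * int (card C) - p" using cCs DCs p1 by simp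
  define Ef where "Ef = {j\<in>{0..<p}. \<phi> j \<in> C \<and> \<phi> (j+1) \<in> C}"
  have "\<phi> ` Ef = D"
  proof (intro equalityI subsetI)
    fix y assume "y \<in> \<phi> ` Ef" thus "y \<in> D" by (auto simp: Ef_def D_def succ)
  next
    fix y assume y: "y \<in> D"
    hence "y \<in> \<phi> ` {0..<p}" using surjphi Csub by (auto simp: D_def)
    then obtain j where "j \<in> {0..<p}" "y = \<phi> j" by auto
    thus "y \<in> \<phi> ` Ef" using y by (auto simp: Ef_def D_def succ)
  qed
  moreover have "inj_on \<phi> Ef" using injphi by (rule inj_on_subset) (auto simp: Ef_def)
  ultimately have cEf: "card Ef = card D" by (metis card_image)
  define E where "E = Ef - {p-1}"
  have finEf: "finite Ef" by (rule finite_subset[of _ "{0..<p}"]) (auto simp: Ef_def)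
  have finE: "finite E" using finEf by (simp add: E_def)
  have "card Ef \<le> card (insert (p-1) E)" by (rule card_mono) (use finE in \<open>auto simp: E_def\<close>)
  also have "\<dots> \<le> card E + 1" by (simp add: card_insert_if finE)
  finally have cE: "card Ef \<le> card E + 1" .
  have Esub: "E \<subseteq> {0..<p-1}" by (auto simp: E_def Ef_def)
  define Je where "Je = {j\<in>E. even j}"
  define Jo where "Jo = {j\<in>E. odd j}"
  have "card E = card Je + card Jo"
  proof -
    have "E = Je \<union> Jo" "Je \<inter> Jo = {}" by (auto simp: Je_def Jo_def)
    moreover have "card (Je \<union> Jo) = card Je + card Jo"
      by (rule card_Un_disjoint) (use finE in \<open>auto simp: Je_def Jo_def\<close>)
    ultimately show ?thesis by simp
  qed
  hence cEs: "card E = card Je + card Jo" .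
  have JeE: "Je \<subseteq> E" and JoE: "Jo \<subseteq> E" by (auto simp: Je_def Jo_def)
  have Jep: "\<forall>j\<in>Je. \<forall>j'\<in>Je. even j = even j'" by (simp add: Je_def)
  have Jop: "\<forall>j\<in>Jo. \<forall>j'\<in>Jo. even j = even j'" by (simp add: Jo_def)
  obtain J where J: "J \<subseteq> E" "\<forall>j\<in>J. \<forall>j'\<in>J. even j = even j'" "card E \<le> 2 * card J"
  proof (cases "card Jo \<le> card Je")
    case True
    hence "card E \<le> 2 * card Je" using cEs by linarith
    thus ?thesis using that[OF JeE Jep] by blast
  next
    case False
    hence "card E \<le> 2 * card Jo" using cEs by linarith
    thus ?thesis using that[OF JoE Jop] by blast
  qed
  have finJ: "finite J" using J finE finite_subset by blast
  have JC: "\<forall>j\<in>J. \<phi> j \<in> C \<and> \<phi> (j+1) \<in> C \<and> \<phi> j \<noteq> \<phi> (j+1)"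
  proof
    fix j assume j: "j \<in> J"
    hence j2: "j \<in> Ef" "j \<in> {0..<p-1}" using J Esub by (auto simp: E_def)
    have "\<phi> j \<noteq> \<phi> (j+1)"
    proof
      assume "\<phi> j = \<phi> (j+1)"
      hence "j = j + 1" using injphi j2 by (auto dest: inj_onD)
      thus False by simp
    qed
    thus "\<phi> j \<in> C \<and> \<phi> (j+1) \<in> C \<and> \<phi> j \<noteq> \<phi> (j+1)" using j2 by (auto simp: Ef_def)
  qed
  have ne: "\<phi> a \<noteq> \<phi> b" if "a \<in> {0..<p}" "b \<in> {0..<p}" "a \<noteq> b" for a b
    using inj_onD[OF injphi] that by blast
  have Jdisj: "\<forall>j\<in>J. \<forall>j'\<in>J. j \<noteq> j' \<longrightarrow> \<phi> j \<noteq> \<phi> j' \<and> \<phi> j \<noteq> \<phi> (j'+1) \<and> \<phi> (j+1) \<noteq> \<phi> j' \<and> \<phi> (j+1) \<noteq> \<phi> (j'+1)"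
  proof (intro ballI impI)
    fix j j' assume jj: "j \<in> J" "j' \<in> J" "j \<noteq> j'"
    have q: "j \<in> {0..<p-1}" "j' \<in> {0..<p-1}" using jj(1,2) J(1) Esub by blast+
    have r: "j \<in> {0..<p}" "j+1 \<in> {0..<p}" "j' \<in> {0..<p}" "j'+1 \<in> {0..<p}" using q by auto
    have par: "even j = even j'" using J(2) jj(1,2) by blast
    have n1: "j \<noteq> j'+1"
    proof
      assume "j = j'+1" hence "even j \<noteq> even j'" by simp
      thus False using par by simp
    qed
    have n2: "j+1 \<noteq> j'"
    proof
      assume "j+1 = j'" hence "even j \<noteq> even j'" by auto
      thus False using par by simp
    qed
    have n3: "j+1 \<noteq> j'+1" using jj(3) by simp
    show "\<phi> j \<noteq> \<phi> j' \<and> \<phi> j \<noteq> \<phi> (j'+1) \<and> \<phi> (j+1) \<noteq> \<phi> j' \<and> \<phi> (j+1) \<noteq> \<phi> (j'+1)"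
      by (intro conjI ne r jj(3) n1 n2 n3)
  qed
  define G where "G = {A. A \<subseteq> C \<and> (\<forall>j\<in>J. \<phi> j \<in> A \<or> \<phi> (j+1) \<notin> A)}"
  have cG: "4^card J * card G = 3^card J * 2^card C"
    unfolding G_def by (rule count_G[OF finJ finC, of \<phi> "\<lambda>j. \<phi> (j+1)", OF JC Jdisj])
  have BG: "{A \<in> Pow C. \<forall>b\<in>C - A. (b + d) mod p \<notin> A} \<subseteq> G"
  proof
    fix A assume A: "A \<in> {A \<in> Pow C. \<forall>b\<in>C - A. (b + d) mod p \<notin> A}"
    have "\<phi> j \<in> A \<or> \<phi> (j+1) \<notin> A" if "j \<in> J" for j
    proof (cases "\<phi> j \<in> A")
      case True thus ?thesis by simp
    next
      case False
      moreover have "\<phi> j \<in> C" using JC that by blast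
      ultimately have "(\<phi> j + d) mod p \<notin> A" using A by blast
      thus ?thesis using succ[of j] unfolding \<sigma>_def by simp
    qed
    thus "A \<in> G" using A by (auto simp: G_def)
  qed
  have finG: "finite G" using finC by (auto simp: G_def)
  have cB: "card {A \<in> Pow C. \<forall>b\<in>C - A. (b + d) mod p \<notin> A} \<le> card G" using BG finG by (rule card_mono[rotated])
  define n where "n = card J"
  have "real n \<ge> (2 * real (card C) - real_of_int p - 1) / 2"
  proof -
    have "real_of_int (int (card D)) \<ge> real_of_int (2 * int (card C) - p)" using cD by (simp only: of_int_le_iff)
    hence "real (card D) \<ge> 2 * real (card C) - real_of_int p" by simp
    moreover have "real (card E) \<le> 2 * real n" "real (card Ef) \<le> real (card E) + 1"
      using J(3) cE unfolding n_def by simp_all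
    ultimately show ?thesis using cEf by simp
  qed
  hence nL: "real n > ln (real_of_int p) / ln (4/3)" using big by linarith
  have l43: "ln (4/3::real) > 0" by simp
  have "ln (real_of_int p) < real n * ln (4/3)" using nL l43 by (simp add: divide_less_eq)
  also have "\<dots> = ln ((4/3) ^ n)" by (simp add: ln_realpow)
  finally have pn: "real_of_int p < (4/3) ^ n" using p1 by (simp add: ln_less_cancel_iff)
  have rG: "real (card G) = 2 ^ card C / (4/3) ^ n"
  proof -
    have "real (4^n * card G) = real (3^n * 2^card C)" using cG unfolding n_def by simp
    hence "4^n * real (card G) = 3^n * 2^card C" by simp
    hence "real (card G) = 3^n * 2^card C / 4^n" by (simp add: field_simps)
    also have "\<dots> = 2 ^ card C / ((4::real)^n / 3^n)" by simp
    also have "\<dots> = 2 ^ card C / (4/3) ^ n" by (simp only: power_divide)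
    finally show ?thesis .
  qed
  have pp0: "0 < real_of_int p" using p1 by simp
  have "0 < (4/3::real) ^ n * real_of_int p" using pp0 by simp
  hence "2 ^ card C / (4/3) ^ n \<le> 2 ^ card C / real_of_int p"
    using divide_left_mono[of "real_of_int p" "(4/3) ^ n" "2 ^ card C"] pn by simp
  moreover have "real (card {A \<in> Pow C. \<forall>b\<in>C - A. (b + d) mod p \<notin> A}) \<le> real (card G)"
    using cB by (simp only: of_nat_le_iff)
  ultimately show ?thesis using rG by simp
qed



lemma parta:
  fixes p :: int and W :: "int set"
  assumes pp: "prime p" and Wsub: "W \<subseteq> {0..<p}" and Wne: "W \<noteq> {}"
    and bound: "real (card W) < (real_of_int p - 1) / 2 - ln (real_of_int p) / ln (4 / 3)"
  shows "\<exists>U V. prime_compatible p U V \<and> W \<subseteq> U \<and> W \<subseteq> V"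
proof -
  have p1: "p > 1" using pp prime_gt_1_int by auto
  define C where "C = {0..<p} - W"
  have Csub: "C \<subseteq> {0..<p}" by (auto simp: C_def)
  have finC: "finite C" using Csub finite_subset by blast
  have finW: "finite W" using Wsub finite_subset by blast
  have cC: "card C = card {0..<p} - card W" using card_Diff_subset[OF finW Wsub] by (simp add: C_def)
  have "card W \<le> card {0..<p}" using Wsub by (intro card_mono) auto
  hence rC: "real (card C) = real_of_int p - real (card W)" using cC p1 by (simp add: of_nat_diff)
  have big: "(2 * real (card C) - real_of_int p - 1) / 2 > ln (real_of_int p) / ln (4/3)"
  proof -
    have "(2 * real (card C) - real_of_int p - 1) / 2 = (real_of_int p - 1) / 2 - real (card W)"
      using rC by (simp add: field_simps)
    thus ?thesis using bound by linarith
  qed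
  define Bad where "Bad d = {A \<in> Pow C. \<forall>b\<in>C - A. (b + d) mod p \<notin> A}" for d
  have bb: "real (card (Bad d)) \<le> 2 ^ card C / real_of_int p" if "d \<in> {1..<p}" for d
    unfolding Bad_def by (rule bad_bound[OF pp Csub that big])
  have BP: "Bad d \<subseteq> Pow C" for d by (auto simp: Bad_def)
  have finB: "finite (Bad d)" for d using BP finC by (meson finite_Pow_iff finite_subset)
  have "card (\<Union>d\<in>{1..<p}. Bad d) \<le> (\<Sum>d\<in>{1..<p}. card (Bad d))" by (rule card_UN_le) simp
  hence "real (card (\<Union>d\<in>{1..<p}. Bad d)) \<le> real (\<Sum>d\<in>{1..<p}. card (Bad d))" by (simp only: of_nat_le_iff)
  also have "\<dots> = (\<Sum>d\<in>{1..<p}. real (card (Bad d)))" by simp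
  also have "\<dots> \<le> (\<Sum>d\<in>{1..<p}. 2 ^ card C / real_of_int p)" by (rule sum_mono) (use bb in auto)
  also have "\<dots> = real (nat (p - 1)) * (2 ^ card C / real_of_int p)" by simp
  also have "\<dots> = (real_of_int p - 1) * (2 ^ card C / real_of_int p)" using p1 by simp
  also have "\<dots> < 2 ^ card C"
  proof -
    have "(real_of_int p - 1) * (2 ^ card C / real_of_int p) = 2 ^ card C - 2 ^ card C / real_of_int p"
      using p1 by (simp add: field_simps)
    moreover have "2 ^ card C / real_of_int p > 0" using p1 by simp
    ultimately show ?thesis by linarith
  qed
  also have "\<dots> = real (card (Pow C))" using finC by (simp add: card_Pow)
  finally have lt: "card (\<Union>d\<in>{1..<p}. Bad d) < card (Pow C)" by (simp only: of_nat_less_iff)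
  have "\<not> Pow C \<subseteq> (\<Union>d\<in>{1..<p}. Bad d)"
  proof
    assume "Pow C \<subseteq> (\<Union>d\<in>{1..<p}. Bad d)"
    hence "card (Pow C) \<le> card (\<Union>d\<in>{1..<p}. Bad d)" by (intro card_mono) (use finB in auto)
    thus False using lt by simp
  qed
  then obtain A where A: "A \<subseteq> C" "\<forall>d\<in>{1..<p}. A \<notin> Bad d" by blast
  define U where "U = W \<union> A"
  define V where "V = W \<union> (C - A)"
  have UmV: "U - V = A" using A by (auto simp: U_def V_def C_def)
  have VmU: "V - U = C - A" using A by (auto simp: U_def V_def C_def)
  have dset: "{(u - v) mod p | u v. u \<in> U - V \<and> v \<in> V - U} = {1..<p}"
  proof (intro equalityI subsetI)
    fix z assume "z \<in> {(u - v) mod p | u v. u \<in> U - V \<and> v \<in> V - U}"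
    then obtain u v where uv: "u \<in> A" "v \<in> C - A" "z = (u - v) mod p" unfolding UmV VmU by blast
    have r: "u \<in> {0..<p}" "v \<in> {0..<p}" "u \<noteq> v" using uv A Csub by auto
    have "z \<noteq> 0"
    proof
      assume "z = 0"
      hence "p dvd u - v" using uv by (simp add: mod_eq_0_iff_dvd)
      thus False using small_dvd_zero[of p "u - v"] r by auto
    qed
    moreover have "0 \<le> z" "z < p" using uv p1 by auto
    ultimately show "z \<in> {1..<p}" by auto
  next
    fix d assume d: "d \<in> {1..<p}"
    hence "A \<notin> Bad d" using A by blast
    then obtain b where b: "b \<in> C - A" "(b + d) mod p \<in> A" using A by (auto simp: Bad_def)
    have "((b + d) mod p - b) mod p = (b + d - b) mod p" by (rule mod_diff_left_eq)
    also have "\<dots> = d" using d by simp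
    finally have e: "((b + d) mod p - b) mod p = d" .
    show "d \<in> {(u - v) mod p | u v. u \<in> U - V \<and> v \<in> V - U}"
      unfolding UmV VmU by (rule CollectI, rule exI[of _ "(b + d) mod p"], rule exI[of _ b]) (use e b in auto)
  qed
  have "U \<subseteq> {0..<p}" "V \<subseteq> {0..<p}" using Wsub Csub A by (auto simp: U_def V_def)
  moreover have "U \<noteq> {}" "V \<noteq> {}" using Wne by (auto simp: U_def V_def)
  ultimately have "prime_compatible p U V" using dset by (simp add: prime_compatible_def)
  thus ?thesis by (auto simp: U_def V_def)
qed


theorem mainTheorem4:
  shows "(\<forall>(p::int) W. prime p \<longrightarrow> W \<subseteq> {0..<p} \<longrightarrow> W \<noteq> {} \<longrightarrow>
            real (card W) < (real_of_int p - 1) / 2 - ln (real_of_int p) / ln (4 / 3) \<longrightarrow>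
            (\<exists>U V. prime_compatible p U V \<and> W \<subseteq> U \<and> W \<subseteq> V))
       \<and> (\<forall>(p::int). prime p \<longrightarrow> p \<ge> 7 \<longrightarrow>
            (\<exists>U V. prime_compatible p U V \<and>
               1 mod p \<in> U - V \<and> 11 mod p \<in> U - V \<and> 6 mod p \<in> V - U \<and>
               card (U \<inter> V) = 2))"
proof (intro conjI allI impI)
  fix p :: int and W :: "int set"
  assume "prime p" "W \<subseteq> {0..<p}" "W \<noteq> {}"
    "real (card W) < (real_of_int p - 1) / 2 - ln (real_of_int p) / ln (4 / 3)"
  thus "\<exists>U V. prime_compatible p U V \<and> W \<subseteq> U \<and> W \<subseteq> V" by (rule parta)
next
  fix p :: int
  assume "prime p" "p \<ge> 7"
  thus "\<exists>U V. prime_compatible p U V \<and>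
               1 mod p \<in> U - V \<and> 11 mod p \<in> U - V \<and> 6 mod p \<in> V - U \<and>
               card (U \<inter> V) = 2" by (rule partb)
qed

end
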